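(* Assume that $d_k^2 < 2p_{k+1}$ for every $k\geq 1$. Then for every integer $N\geq 1$ there is a prime $p$ with $N^2 < p < (N+1)^2$.
   Context: $p_k$ denotes the $k$th prime ($p_1=2$) and $d_k := p_{k+1}-p_k$. *)

theory Defs
  imports Main "HOL-Computational_Algebra.Primes" "HOL-Library.Infinite_Set"
begin

text \<open>p k is the k-th prime, 1-based: p 1 = 2. enumerate S 0 is the least element of S.\<close>
definition p :: "nat \<Rightarrow> nat" where
  "p k = enumerate {q::nat. prime q} (k - 1)"

definition d :: "nat \<Rightarrow> nat" where
  "d k = p (k + 1) - p k"

end

theory Submission
  imports Defs
begin

lemma primes_inf: "infinite {q::nat. prime q}"
  using primes_infinite by simp

lemma p_prime: "prime (p k)"
  unfolding p_def using enumerate_in_set[OF primes_inf] by auto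

lemma p_mono: "k \<ge> 1 \<Longrightarrow> p k < p (k+1)"
  unfolding p_def using strict_mono_enumerate[OF primes_inf]
  by (simp add: strict_mono_def)

lemma p_onto: "prime q \<Longrightarrow> \<exists>k\<ge>1. p k = q"
proof -
  assume "prime q"
  then have "q \<in> range (enumerate {q::nat. prime q})"
    using range_enumerate[OF primes_inf] by auto
  then obtain i where "enumerate {q::nat. prime q} i = q" by auto
  then show ?thesis by (intro exI[of _ "i+1"]) (simp add: p_def)
qed

lemma sq_not_prime: "(n::nat) \<ge> 2 \<Longrightarrow> \<not> prime (n^2)"
  by (simp add: prime_power_iff)

lemma lin: "(A::nat) \<le> S \<Longrightarrow> A = 2*M + 3*D \<Longrightarrow> P \<le> M \<Longrightarrow> P = 2*Q + 3*N
   \<Longrightarrow> Q = R \<Longrightarrow> S < 2*(q + D) \<Longrightarrow> q < R \<Longrightarrow> False" by presburger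

theorem theorem2p3:
  assumes "\<forall>k::nat. k \<ge> 1 \<longrightarrow> (d k)^2 < 2 * p (k + 1)"
  shows "\<forall>N::nat. N \<ge> 1 \<longrightarrow> (\<exists>q::nat. prime q \<and> N^2 < q \<and> q < (N + 1)^2)"
proof (intro allI impI, rule ccontr)
  fix N :: nat
  assume N: "N \<ge> 1" and no: "\<not> (\<exists>q::nat. prime q \<and> N^2 < q \<and> q < (N + 1)^2)"
  have N2: "N \<ge> 2"
  proof (rule ccontr)
    assume "\<not> N \<ge> 2"
    then have "N = 1" using N by simp
    then have "prime (2::nat) \<and> N^2 < 2 \<and> 2 < (N + 1)^2" using two_is_prime_nat by (simp add: power2_eq_square)
    then show False using no by blast
  qed
  define S where "S = {q::nat. prime q \<and> q \<le> N^2}"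
  have fin: "finite S" unfolding S_def by simp
  have "2 \<in> S"
  proof -
    have "N \<le> N^2" by (simp add: power2_eq_square)
    then show ?thesis using N2 two_is_prime_nat by (simp add: S_def)
  qed
  then have ne: "S \<noteq> {}" by auto
  define q where "q = Max S"
  have qS: "q \<in> S" using fin ne q_def Max_in by auto
  have qmax: "\<And>r. prime r \<Longrightarrow> r \<le> N^2 \<Longrightarrow> r \<le> q" using fin q_def S_def by auto
  obtain k where k: "k \<ge> 1" "p k = q" using p_onto qS S_def by auto
  have qlt: "q < N^2" using qS sq_not_prime[OF N2] unfolding S_def by (metis le_neq_implies_less mem_Collect_eq)
  have pr: "prime (p (k+1))" by (rule p_prime)
  have gt: "p (k+1) > N^2"
    using qmax[OF pr] p_mono[OF k(1)] k(2) by fastforce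
  have "p (k+1) \<ge> (N+1)^2" using no pr gt by (meson not_le)
  moreover have "p (k+1) \<noteq> (N+1)^2" using pr sq_not_prime[of "N+1"] N by auto
  ultimately have big: "p (k+1) \<ge> (N+1)^2 + 1" by simp
  have dk: "d k = p (k+1) - q" using k by (simp add: d_def)
  have dge: "d k \<ge> 2*N + 3" using big qlt dk by (simp add: power2_eq_square algebra_simps)
  have a1: "(d k)^2 < 2 * p (k+1)" using assms k(1) by blast
  have a2: "p (k+1) = q + d k" using dk p_mono[OF k(1)] k(2) by simp
  have ineq: "(d k)^2 < 2 * (q + d k)" using a1 a2 by simp
  have "(d k)^2 \<ge> (2*N+3) * d k" using dge by (simp add: power2_eq_square)
  moreover have "(2*N+3) * d k = 2*(N * d k) + 3 * d k" by (simp add: algebra_simps)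
  moreover have "N * d k \<ge> N * (2*N+3)" using dge by (rule mult_le_mono2)
  moreover have "N * (2*N+3) = 2*(N*N) + 3*N" by (simp add: algebra_simps)
  moreover have "N*N = N^2" by (simp add: power2_eq_square)
  ultimately show False using ineq qlt lin by metis
qed

end
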